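(* Let $q$ be a prime power and let $n,k$ be integers with $3\le k\le n-2\le q-2$. Let $\alpha_1,\dots,\alpha_n\in\mathbb{F}_q$ be pairwise distinct, and let $C_{k-1,k-2}$ be the linear code generated by the $k\times n$ matrix $G_{k-1,k-2}$ whose rows are $(\alpha_1^{e},\dots,\alpha_n^{e})$ for $e=0,1,\dots,k-3,k,k+1$. For $1\le i\le n$ let $u_i=\prod_{1\le j\le n,\,j\ne i}(\alpha_i-\alpha_j)^{-1}$, and let $\sigma_t=\sigma_t(\alpha_1,\dots,\alpha_n)$. Define $$\Lambda_i=\alpha_i^{n-k+1}-\sigma_1\alpha_i^{n-k}+\sigma_2\alpha_i^{n-k-1}-\sigma_3\alpha_i^{n-k-2},\qquad \Gamma_i=\alpha_i^{n-k}-\sigma_1\alpha_i^{n-k-1}+\sigma_2\alpha_i^{n-k-2}.$$ Then the $(n-k)\times n$ matrix $H_{k-1,k-2}$ whose rows are $(u_1\alpha_1^{j},\dots,u_n\alpha_n^{j})$ for $j=0,1,\dots,n-k-3$, followed by $(u_1\Lambda_1,\dots,u_n\Lambda_n)$ and $(u_1\Gamma_1,\dots,u_n\Gamma_n)$, is a parity-check matrix for $C_{k-1,k-2}$.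
   Context: Convention: $0^0=1$. For variables $x_1,\dots,x_m$, $\sigma_t(x_1,\dots,x_m)$ denotes the $t$-th elementary symmetric polynomial, with $\sigma_0=1$ and $\sigma_t=0$ for $t>m$. A parity-check matrix of an $[n,k]$ code $C$ is an $(n-k)\times n$ matrix of rank $n-k$ whose rows span the dual code $C^\perp$ (Euclidean inner product). *)

theory Defs
  imports Main
begin

text \<open>Vectors of length n over a field are functions nat => 'a, only the
  coordinates 0..n-1 matter (they are taken to be 0 outside). A matrix with m rows
  and n columns is a function M :: nat => nat => 'a, M r i being the entry in row r,
  column i (r < m, i < n).\<close>

definition zero_ext :: "nat \<Rightarrow> (nat \<Rightarrow> 'a::zero) \<Rightarrow> nat \<Rightarrow> 'a" where
  "zero_ext n x = (\<lambda>i. if i < n then x i else 0)"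

definition vecs :: "nat \<Rightarrow> (nat \<Rightarrow> 'a::zero) set" where
  "vecs n = {x. \<forall>i\<ge>n. x i = 0}"

definition row_space :: "nat \<Rightarrow> nat \<Rightarrow> (nat \<Rightarrow> nat \<Rightarrow> 'a::field) \<Rightarrow> (nat \<Rightarrow> 'a) set" where
  "row_space m n M = {zero_ext n (\<lambda>i. \<Sum>r<m. c r * M r i) | c. True}"

definition dot :: "nat \<Rightarrow> (nat \<Rightarrow> 'a::field) \<Rightarrow> (nat \<Rightarrow> 'a) \<Rightarrow> 'a" where
  "dot n x y = (\<Sum>i<n. x i * y i)"

definition dual_code :: "nat \<Rightarrow> (nat \<Rightarrow> 'a::field) set \<Rightarrow> (nat \<Rightarrow> 'a) set" where
  "dual_code n C = {y \<in> vecs n. \<forall>x\<in>C. dot n x y = 0}"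

definition full_row_rank :: "nat \<Rightarrow> nat \<Rightarrow> (nat \<Rightarrow> nat \<Rightarrow> 'a::field) \<Rightarrow> bool" where
  "full_row_rank m n M \<longleftrightarrow>
     (\<forall>c. (\<forall>i<n. (\<Sum>r<m. c r * M r i) = 0) \<longrightarrow> (\<forall>r<m. c r = 0))"

definition parity_check :: "nat \<Rightarrow> nat \<Rightarrow> (nat \<Rightarrow> nat \<Rightarrow> 'a::field) \<Rightarrow> (nat \<Rightarrow> 'a) set \<Rightarrow> bool" where
  "parity_check m n H C \<longleftrightarrow> full_row_rank m n H \<and> row_space m n H = dual_code n C"

definition esym :: "nat \<Rightarrow> (nat \<Rightarrow> 'a::comm_ring_1) \<Rightarrow> nat \<Rightarrow> 'a" where
  "esym n x t = (\<Sum>S | S \<subseteq> {..<n} \<and> card S = t. \<Prod>i\<in>S. x i)"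

definition gen_exp :: "nat \<Rightarrow> nat \<Rightarrow> nat" where
  "gen_exp k r = (if r \<le> k - 3 then r else r + 2)"

definition genG :: "nat \<Rightarrow> (nat \<Rightarrow> 'a::field) \<Rightarrow> nat \<Rightarrow> nat \<Rightarrow> 'a" where
  "genG k \<alpha> r i = \<alpha> i ^ gen_exp k r"

definition uco :: "nat \<Rightarrow> (nat \<Rightarrow> 'a::field) \<Rightarrow> nat \<Rightarrow> 'a" where
  "uco n \<alpha> i = (\<Prod>j\<in>{..<n} - {i}. inverse (\<alpha> i - \<alpha> j))"

definition Lam :: "nat \<Rightarrow> nat \<Rightarrow> (nat \<Rightarrow> 'a::field) \<Rightarrow> nat \<Rightarrow> 'a" where
  "Lam n k \<alpha> i = \<alpha> i ^ (n - k + 1) - esym n \<alpha> 1 * \<alpha> i ^ (n - k)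
      + esym n \<alpha> 2 * \<alpha> i ^ (n - k - 1) - esym n \<alpha> 3 * \<alpha> i ^ (n - k - 2)"

definition Gam :: "nat \<Rightarrow> nat \<Rightarrow> (nat \<Rightarrow> 'a::field) \<Rightarrow> nat \<Rightarrow> 'a" where
  "Gam n k \<alpha> i = \<alpha> i ^ (n - k) - esym n \<alpha> 1 * \<alpha> i ^ (n - k - 1)
      + esym n \<alpha> 2 * \<alpha> i ^ (n - k - 2)"

definition parH :: "nat \<Rightarrow> nat \<Rightarrow> (nat \<Rightarrow> 'a::field) \<Rightarrow> nat \<Rightarrow> nat \<Rightarrow> 'a" where
  "parH n k \<alpha> r i =
     (if r < n - k - 2 then uco n \<alpha> i * \<alpha> i ^ r
      else if r = n - k - 2 then uco n \<alpha> i * Lam n k \<alpha> i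
      else uco n \<alpha> i * Gam n k \<alpha> i)"

end

theory Submission
  imports Defs "HOL-Computational_Algebra.Polynomial"
begin


lemma roots_zero:
  fixes p :: "'a::field poly" and \<alpha> :: "nat \<Rightarrow> 'a"
  assumes inj: "inj_on \<alpha> {..<n}" and c: "\<forall>m\<ge>n. coeff p m = 0"
    and r: "\<forall>i<n. poly p (\<alpha> i) = 0"
  shows "p = 0"
proof (rule ccontr)
  assume nz: "p \<noteq> 0"
  have "coeff p (degree p) \<noteq> 0" using nz by simp
  hence dl: "degree p < n" using c by (meson not_le)
  have "\<alpha> ` {..<n} \<subseteq> {x. poly p x = 0}" using r by auto
  moreover have "finite {x. poly p x = 0}" using nz poly_roots_finite by blast
  ultimately have "card (\<alpha> ` {..<n}) \<le> card {x. poly p x = 0}" by (rule card_mono[rotated])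
  also have "\<dots> \<le> degree p" using card_poly_roots_bound[OF nz] .
  finally show False using dl card_image[OF inj] by simp
qed

lemma uco_prod:
  fixes \<alpha> :: "nat \<Rightarrow> 'a::field"
  assumes inj: "inj_on \<alpha> {..<n}" and i: "i < n"
  shows "uco n \<alpha> i * (\<Prod>j\<in>{..<n} - {i}. \<alpha> i - \<alpha> j) = 1"
proof -
  have nz: "(\<Prod>j\<in>{..<n} - {i}. \<alpha> i - \<alpha> j) \<noteq> 0"
    using inj i by (auto simp: inj_on_def)
  have "uco n \<alpha> i = inverse (\<Prod>j\<in>{..<n} - {i}. \<alpha> i - \<alpha> j)"
    unfolding uco_def using prod_inversef[of "\<lambda>j. \<alpha> i - \<alpha> j" "{..<n} - {i}"] by (simp add: o_def)
  thus ?thesis using nz by simp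
qed

lemma uco_nz:
  fixes \<alpha> :: "nat \<Rightarrow> 'a::field"
  assumes inj: "inj_on \<alpha> {..<n}" and i: "i < n"
  shows "uco n \<alpha> i \<noteq> 0"
  using uco_prod[OF assms] by auto

definition lag :: "nat \<Rightarrow> (nat \<Rightarrow> 'a::field) \<Rightarrow> nat \<Rightarrow> 'a poly" where
  "lag n \<alpha> i = (\<Prod>j\<in>{..<n} - {i}. [:- \<alpha> j, 1:])"

lemma lag_coeff:
  fixes \<alpha> :: "nat \<Rightarrow> 'a::field"
  assumes i: "i < n"
  shows "coeff (lag n \<alpha> i) (n - 1) = 1" and "m \<ge> n \<Longrightarrow> coeff (lag n \<alpha> i) m = 0"
proof -
  have d: "degree (lag n \<alpha> i) = n - 1"
    unfolding lag_def using i by (subst degree_prod_eq_sum_degree) auto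
  have "lead_coeff (lag n \<alpha> i) = 1" unfolding lag_def lead_coeff_prod by simp
  thus "coeff (lag n \<alpha> i) (n - 1) = 1" using d by simp
  show "m \<ge> n \<Longrightarrow> coeff (lag n \<alpha> i) m = 0" using d i by (intro coeff_eq_0) auto
qed

lemma lag_poly:
  fixes \<alpha> :: "nat \<Rightarrow> 'a::field"
  assumes inj: "inj_on \<alpha> {..<n}" and i: "i < n" and l: "l < n"
  shows "uco n \<alpha> i * poly (lag n \<alpha> i) (\<alpha> l) = (if i = l then 1 else 0)"
proof -
  have "poly (lag n \<alpha> i) (\<alpha> l) = (\<Prod>j\<in>{..<n} - {i}. \<alpha> l - \<alpha> j)"
    unfolding lag_def poly_prod by simp
  thus ?thesis using uco_prod[OF inj i] l i by auto
qed

lemma lagsum: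
  fixes p :: "'a::field poly" and \<alpha> :: "nat \<Rightarrow> 'a"
  assumes inj: "inj_on \<alpha> {..<n}" and c: "\<forall>m\<ge>n. coeff p m = 0" and n: "n > 0"
  shows "(\<Sum>i<n. uco n \<alpha> i * poly p (\<alpha> i)) = coeff p (n - 1)"
proof -
  define Q where "Q = p - (\<Sum>i<n. smult (uco n \<alpha> i * poly p (\<alpha> i)) (lag n \<alpha> i))"
  have "Q = 0"
  proof (rule roots_zero[OF inj])
    show "\<forall>m\<ge>n. coeff Q m = 0" using c by (auto simp add: Q_def coeff_sum lag_coeff(2) intro!: sum.neutral)
    show "\<forall>l<n. poly Q (\<alpha> l) = 0"
    proof (intro allI impI)
      fix l assume l: "l < n"
      have "poly Q (\<alpha> l) = poly p (\<alpha> l) - (\<Sum>i<n. poly p (\<alpha> i) * (uco n \<alpha> i * poly (lag n \<alpha> i) (\<alpha> l)))"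
        by (simp add: Q_def poly_sum mult_ac)
      also have "\<dots> = 0" using l by (simp add: lag_poly[OF inj _ l] if_distrib cong: if_cong)
      finally show "poly Q (\<alpha> l) = 0" .
    qed
  qed
  hence "coeff Q (n - 1) = 0" by simp
  moreover have "(\<Sum>i<n. uco n \<alpha> i * poly p (\<alpha> i) * coeff (lag n \<alpha> i) (n - 1)) = (\<Sum>i<n. uco n \<alpha> i * poly p (\<alpha> i))"
    by (intro sum.cong refl) (metis lag_coeff(1) lessThan_iff mult.right_neutral)
  ultimately show ?thesis by (simp add: Q_def coeff_sum)
qed



lemma vieta:
  fixes \<alpha> :: "nat \<Rightarrow> 'a::field"
  assumes m: "m \<le> n"
  shows "coeff (\<Prod>j<n. [:- \<alpha> j, 1:]) m = (-1)^(n-m) * esym n \<alpha> (n-m)"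
proof -
  have e: "[:- \<alpha> j, 1:] = [:- \<alpha> j:] + monom 1 1" for j
    by (simp add: monom_altdef)
  have "(\<Prod>j<n. [:- \<alpha> j, 1:]) = (\<Sum>X\<in>Pow {..<n}. (\<Prod>j\<in>X. [:- \<alpha> j:]) * (\<Prod>j\<in>{..<n}-X. monom 1 1))"
    unfolding e by (rule prod_add) simp
  also have "\<dots> = (\<Sum>X\<in>Pow {..<n}. monom (\<Prod>j\<in>X. - \<alpha> j) (n - card X))"
  proof (intro sum.cong refl)
    fix X assume X: "X \<in> Pow {..<n}"
    hence fX: "finite X" by (auto intro: finite_subset)
    have c: "card ({..<n} - X) = n - card X" using X fX by (subst card_Diff_subset) auto
    have "(\<Prod>j\<in>X. [:- \<alpha> j:]) = [:\<Prod>j\<in>X. - \<alpha> j:]"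
      using fX by (induction X rule: finite_induct) auto
    moreover have "(\<Prod>j\<in>{..<n}-X. monom (1::'a) 1) = monom 1 (n - card X)"
      by (simp add: monom_power c)
    ultimately show "(\<Prod>j\<in>X. [:- \<alpha> j:]) * (\<Prod>j\<in>{..<n}-X. monom 1 1) = monom (\<Prod>j\<in>X. - \<alpha> j) (n - card X)"
      by (simp add: smult_monom)
  qed
  finally have "coeff (\<Prod>j<n. [:- \<alpha> j, 1:]) m = (\<Sum>X\<in>Pow {..<n}. if n - card X = m then (\<Prod>j\<in>X. - \<alpha> j) else 0)"
    by (simp add: coeff_sum coeff_monom eq_commute)
  also have "\<dots> = (\<Sum>X\<in>{X \<in> Pow {..<n}. card X = n - m}. (\<Prod>j\<in>X. - \<alpha> j))"
  proof -
    have "(\<Sum>X\<in>Pow {..<n}. if n - card X = m then (\<Prod>j\<in>X. - \<alpha> j) else 0) = (\<Sum>X\<in>Pow {..<n}. if card X = n - m then (\<Prod>j\<in>X. - \<alpha> j) else 0)"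
    proof (intro sum.cong refl)
      fix X assume "X \<in> Pow {..<n}"
      hence "card X \<le> n" using card_mono[of "{..<n}" X] by auto
      thus "(if n - card X = m then (\<Prod>j\<in>X. - \<alpha> j) else 0) = (if card X = n - m then (\<Prod>j\<in>X. - \<alpha> j) else 0)"
        using m by auto
    qed
    thus ?thesis by (simp only: sum.inter_filter[symmetric] finite_Pow_iff finite_lessThan)
  qed
  also have "\<dots> = (\<Sum>X\<in>{X \<in> Pow {..<n}. card X = n - m}. (-1)^(n-m) * (\<Prod>j\<in>X. \<alpha> j))"
  proof (intro sum.cong refl)
    fix X assume X: "X \<in> {X \<in> Pow {..<n}. card X = n - m}"
    have "(\<Prod>j\<in>X. - \<alpha> j) = (\<Prod>j\<in>X. (-1) * \<alpha> j)" by simp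
    also have "\<dots> = (-1)^card X * (\<Prod>j\<in>X. \<alpha> j)" unfolding prod.distrib by simp
    finally show "(\<Prod>j\<in>X. - \<alpha> j) = (-1)^(n-m) * (\<Prod>j\<in>X. \<alpha> j)" using X by simp
  qed
  also have "\<dots> = (-1)^(n-m) * esym n \<alpha> (n-m)"
    unfolding esym_def by (simp add: sum_distrib_left Pow_def conj_commute)
  finally show ?thesis .
qed



definition phi :: "nat \<Rightarrow> (nat \<Rightarrow> 'a::field) \<Rightarrow> nat \<Rightarrow> 'a poly \<Rightarrow> 'a" where
  "phi n \<alpha> s p = (\<Sum>i<n. uco n \<alpha> i * (\<alpha> i ^ s * poly p (\<alpha> i)))"

lemma shift_step:
  fixes g :: "'a::field poly" and \<alpha> :: "nat \<Rightarrow> 'a"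
  assumes inj: "inj_on \<alpha> {..<n}" and c: "\<forall>m\<ge>d. coeff g m = 0" and ds: "d + s \<le> n" and s: "s < n"
  shows "phi n \<alpha> s g = coeff g (n - 1 - s)"
proof -
  have "phi n \<alpha> s g = (\<Sum>i<n. uco n \<alpha> i * poly (monom 1 s * g) (\<alpha> i))"
    by (simp add: phi_def poly_monom)
  also have "\<dots> = coeff (monom 1 s * g) (n - 1)"
  proof (rule lagsum[OF inj])
    show "\<forall>m\<ge>n. coeff (monom 1 s * g) m = 0" using c ds s by (auto simp: coeff_monom_mult)
  qed (use s in auto)
  also have "\<dots> = coeff g (n - 1 - s)" using s by (simp add: coeff_monom_mult)
  finally show ?thesis .
qed

lemma shift_zero:
  fixes g :: "'a::field poly" and \<alpha> :: "nat \<Rightarrow> 'a"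
  assumes inj: "inj_on \<alpha> {..<n}" and c: "\<forall>m\<ge>d. coeff g m = 0" and ds: "d + s < n"
  shows "phi n \<alpha> s g = 0"
  using shift_step[OF inj c] ds c by auto

definition Lp :: "nat \<Rightarrow> nat \<Rightarrow> (nat \<Rightarrow> 'a::field) \<Rightarrow> 'a poly" where
  "Lp n k \<alpha> = monom 1 (n - k + 1) - smult (esym n \<alpha> 1) (monom 1 (n - k))
      + smult (esym n \<alpha> 2) (monom 1 (n - k - 1)) - smult (esym n \<alpha> 3) (monom 1 (n - k - 2))"

definition Gp :: "nat \<Rightarrow> nat \<Rightarrow> (nat \<Rightarrow> 'a::field) \<Rightarrow> 'a poly" where
  "Gp n k \<alpha> = monom 1 (n - k) - smult (esym n \<alpha> 1) (monom 1 (n - k - 1))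
      + smult (esym n \<alpha> 2) (monom 1 (n - k - 2))"

lemma poly_Lp: "poly (Lp n k \<alpha>) (\<alpha> i) = Lam n k \<alpha> i"
  by (simp add: Lp_def Lam_def poly_monom)

lemma poly_Gp: "poly (Gp n k \<alpha>) (\<alpha> i) = Gam n k \<alpha> i"
  by (simp add: Gp_def Gam_def poly_monom)

lemma coeff_Lp:
  assumes "k + 2 \<le> n"
  shows "coeff (Lp n k \<alpha>) (n - k + 1) = 1" "coeff (Lp n k \<alpha>) (n - k) = - esym n \<alpha> 1"
    "m > n - k + 1 \<Longrightarrow> coeff (Lp n k \<alpha>) m = 0"
  using assms by (auto simp: Lp_def coeff_monom)

lemma coeff_Gp:
  assumes "k + 2 \<le> n"
  shows "coeff (Gp n k \<alpha>) (n - k + 1) = 0" "coeff (Gp n k \<alpha>) (n - k) = 1"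
    "m > n - k \<Longrightarrow> coeff (Gp n k \<alpha>) m = 0"
  using assms by (auto simp: Gp_def coeff_monom)

lemma esym0: "esym n \<alpha> 0 = 1"
proof -
  have "{S. S \<subseteq> {..<n} \<and> card S = 0} = {{}}"
    using finite_subset[of _ "{..<n}"] by (auto simp: card_eq_0_iff)
  thus ?thesis by (simp add: esym_def)
qed

lemma coeff_P_high:
  fixes \<alpha> :: "nat \<Rightarrow> 'a::field"
  assumes "m > n"
  shows "coeff (\<Prod>j<n. [:- \<alpha> j, 1:]) m = 0"
proof -
  have "degree (\<Prod>j<n. [:- \<alpha> j, 1:]) = n"
    by (subst degree_prod_eq_sum_degree) auto
  thus ?thesis using assms by (intro coeff_eq_0) auto
qed

lemma key_R:
  fixes \<alpha> :: "nat \<Rightarrow> 'a::field"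
  assumes n: "5 \<le> n"
  defines "R \<equiv> monom 1 n - smult (esym n \<alpha> 1) (monom 1 (n - 1)) + smult (esym n \<alpha> 2) (monom 1 (n - 2))
     - smult (esym n \<alpha> 3) (monom 1 (n - 3)) - (\<Prod>j<n. [:- \<alpha> j, 1:])"
  shows "\<forall>m\<ge>n - 3. coeff R m = 0"
    and "i < n \<Longrightarrow> poly R (\<alpha> i) = \<alpha> i ^ n - esym n \<alpha> 1 * \<alpha> i ^ (n - 1) + esym n \<alpha> 2 * \<alpha> i ^ (n - 2)
          - esym n \<alpha> 3 * \<alpha> i ^ (n - 3)"
proof -
  show "\<forall>m\<ge>n - 3. coeff R m = 0"
  proof (intro allI impI)
    fix m assume m: "m \<ge> n - 3"
    consider "m > n" | "m = n" | "m = n - 1" | "m = n - 2" | "m = n - 3" using m by linarith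
    thus "coeff R m = 0"
    proof cases
      case 1 thus ?thesis using coeff_P_high[OF 1, of \<alpha>] by (auto simp: R_def coeff_monom)
    next
      case 2 thus ?thesis using vieta[of n n \<alpha>] n by (auto simp add: R_def coeff_monom esym0)
    next
      case 3 thus ?thesis using vieta[of "n-1" n \<alpha>] n by (auto simp add: R_def coeff_monom)
    next
      case 4 thus ?thesis using vieta[of "n-2" n \<alpha>] n by (auto simp add: R_def coeff_monom)
    next
      case 5 thus ?thesis using vieta[of "n-3" n \<alpha>] n by (auto simp add: R_def coeff_monom)
    qed
  qed
  assume i: "i < n"
  have "poly (\<Prod>j<n. [:- \<alpha> j, 1:]) (\<alpha> i) = 0" using i by (auto simp: poly_prod)
  thus "poly R (\<alpha> i) = \<alpha> i ^ n - esym n \<alpha> 1 * \<alpha> i ^ (n - 1) + esym n \<alpha> 2 * \<alpha> i ^ (n - 2)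
          - esym n \<alpha> 3 * \<alpha> i ^ (n - 3)" by (simp add: R_def poly_monom)
qed



lemma pw_L:
  fixes x s1 s2 s3 :: "'a::field"
  assumes "3 \<le> k" "k + 2 \<le> n"
  shows "x ^ (k - 1) * (x ^ (n - k + 1) - s1 * x ^ (n - k) + s2 * x ^ (n - k - 1) - s3 * x ^ (n - k - 2))
    = x ^ n - s1 * x ^ (n - 1) + s2 * x ^ (n - 2) - s3 * x ^ (n - 3)"
proof -
  have e: "k - 1 + (n - k + 1) = n" "k - 1 + (n - k) = n - 1" "k - 1 + (n - k - 1) = n - 2" "k - 1 + (n - k - 2) = n - 3"
    using assms by auto
  have p: "x ^ n = x ^ (k - 1) * x ^ (n - k + 1)" "x ^ (n - 1) = x ^ (k - 1) * x ^ (n - k)"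
    "x ^ (n - 2) = x ^ (k - 1) * x ^ (n - k - 1)" "x ^ (n - 3) = x ^ (k - 1) * x ^ (n - k - 2)"
    by (simp_all only: e flip: power_add)
  show ?thesis unfolding p by (simp only: right_diff_distrib distrib_left mult.left_commute)
qed

lemma pw_G:
  fixes x s1 s2 :: "'a::field"
  assumes "3 \<le> k" "k + 2 \<le> n"
  shows "x ^ k * (x ^ (n - k) - s1 * x ^ (n - k - 1) + s2 * x ^ (n - k - 2))
    = x ^ n - s1 * x ^ (n - 1) + s2 * x ^ (n - 2)"
proof -
  have e: "k + (n - k) = n" "k + (n - k - 1) = n - 1" "k + (n - k - 2) = n - 2"
    using assms by auto
  have p: "x ^ n = x ^ k * x ^ (n - k)" "x ^ (n - 1) = x ^ k * x ^ (n - k - 1)"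
    "x ^ (n - 2) = x ^ k * x ^ (n - k - 2)"
    by (simp_all only: e flip: power_add)
  show ?thesis unfolding p by (simp only: right_diff_distrib distrib_left mult.left_commute)
qed

locale cfg =
  fixes \<alpha> :: "nat \<Rightarrow> 'a::field" and n k :: nat
  assumes inj: "inj_on \<alpha> {..<n}" and k3: "3 \<le> k" and kn: "k + 2 \<le> n"
begin

definition "RR = monom 1 n - smult (esym n \<alpha> 1) (monom 1 (n - 1)) + smult (esym n \<alpha> 2) (monom 1 (n - 2))
     - smult (esym n \<alpha> 3) (monom 1 (n - 3)) - (\<Prod>j<n. [:- \<alpha> j, 1:])"

lemma RR: "\<forall>m\<ge>n - 3. coeff RR m = 0"
    "i < n \<Longrightarrow> poly RR (\<alpha> i) = \<alpha> i ^ n - esym n \<alpha> 1 * \<alpha> i ^ (n - 1) + esym n \<alpha> 2 * \<alpha> i ^ (n - 2)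
          - esym n \<alpha> 3 * \<alpha> i ^ (n - 3)"
  using key_R[where n=n and \<alpha>=\<alpha>] k3 kn unfolding RR_def by auto

lemma orth_L:
  assumes e: "e \<le> k - 3 \<or> e = k \<or> e = k + 1"
  shows "phi n \<alpha> e (Lp n k \<alpha>) = 0"
proof -
  consider "e \<le> k - 3" | "e = k" | "e = k + 1" using e by auto
  thus ?thesis
  proof cases
    case 1
    show ?thesis by (rule shift_zero[OF inj, of "n - k + 2"]) (use 1 k3 kn in \<open>auto intro!: coeff_Lp(3)[OF kn]\<close>)
  next
    case 2
    have "phi n \<alpha> e (Lp n k \<alpha>) = phi n \<alpha> 1 RR"
      unfolding phi_def
    proof (intro sum.cong refl)
      fix i assume i: "i \<in> {..<n}"
      have "\<alpha> i ^ k = \<alpha> i * \<alpha> i ^ (k - 1)" using k3 by (simp flip: power_Suc)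
      thus "uco n \<alpha> i * (\<alpha> i ^ e * poly (Lp n k \<alpha>) (\<alpha> i)) = uco n \<alpha> i * (\<alpha> i ^ 1 * poly RR (\<alpha> i))"
        using 2 i RR(2) pw_L[OF k3 kn, of "\<alpha> i"] by (simp add: poly_Lp Lam_def)
    qed
    also have "\<dots> = 0" by (rule shift_zero[OF inj RR(1)]) (use k3 kn in auto)
    finally show ?thesis .
  next
    case 3
    have "phi n \<alpha> e (Lp n k \<alpha>) = phi n \<alpha> 2 RR"
      unfolding phi_def
    proof (intro sum.cong refl)
      fix i assume i: "i \<in> {..<n}"
      have "\<alpha> i ^ (k + 1) = \<alpha> i ^ 2 * \<alpha> i ^ (k - 1)" using k3 by (simp flip: power_add)
      thus "uco n \<alpha> i * (\<alpha> i ^ e * poly (Lp n k \<alpha>) (\<alpha> i)) = uco n \<alpha> i * (\<alpha> i ^ 2 * poly RR (\<alpha> i))"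
        using 3 i RR(2) pw_L[OF k3 kn, of "\<alpha> i"] by (simp add: poly_Lp Lam_def mult.assoc)
    qed
    also have "\<dots> = 0" by (rule shift_zero[OF inj RR(1)]) (use k3 kn in auto)
    finally show ?thesis .
  qed
qed

lemma orth_G:
  assumes e: "e \<le> k - 3 \<or> e = k \<or> e = k + 1"
  shows "phi n \<alpha> e (Gp n k \<alpha>) = 0"
proof -
  define R2 where "R2 = RR + smult (esym n \<alpha> 3) (monom 1 (n - 3))"
  have R2c: "\<forall>m\<ge>n - 2. coeff R2 m = 0" using RR(1) k3 kn by (auto simp: R2_def coeff_monom)
  have R2p: "\<alpha> i ^ k * Gam n k \<alpha> i = poly R2 (\<alpha> i)" if i: "i < n" for i
    using RR(2)[OF i] pw_G[OF k3 kn, of "\<alpha> i"] by (simp add: R2_def poly_monom Gam_def)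
  consider "e \<le> k - 3" | "e = k" | "e = k + 1" using e by auto
  thus ?thesis
  proof cases
    case 1
    show ?thesis by (rule shift_zero[OF inj, of "n - k + 1"]) (use 1 k3 kn in \<open>auto intro!: coeff_Gp(3)[OF kn]\<close>)
  next
    case 2
    have "phi n \<alpha> e (Gp n k \<alpha>) = phi n \<alpha> 0 R2"
      unfolding phi_def
    proof (intro sum.cong refl)
      fix i assume i: "i \<in> {..<n}"
      thus "uco n \<alpha> i * (\<alpha> i ^ e * poly (Gp n k \<alpha>) (\<alpha> i)) = uco n \<alpha> i * (\<alpha> i ^ 0 * poly R2 (\<alpha> i))"
        using 2 R2p by (simp add: poly_Gp)
    qed
    also have "\<dots> = 0" by (rule shift_zero[OF inj R2c]) (use k3 kn in auto)
    finally show ?thesis .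
  next
    case 3
    have "phi n \<alpha> e (Gp n k \<alpha>) = phi n \<alpha> 1 R2"
      unfolding phi_def
    proof (intro sum.cong refl)
      fix i assume i: "i \<in> {..<n}"
      thus "uco n \<alpha> i * (\<alpha> i ^ e * poly (Gp n k \<alpha>) (\<alpha> i)) = uco n \<alpha> i * (\<alpha> i ^ 1 * poly R2 (\<alpha> i))"
        using 3 R2p[of i] by (simp add: poly_Gp mult.assoc)
    qed
    also have "\<dots> = 0" by (rule shift_zero[OF inj R2c]) (use k3 kn in auto)
    finally show ?thesis .
  qed
qed

lemma orth_M:
  assumes e: "e \<le> k - 3 \<or> e = k \<or> e = k + 1" and r: "r < n - k - 2"
  shows "phi n \<alpha> e (monom 1 r) = 0"
  by (rule shift_zero[OF inj, of "r + 1"]) (use e r k3 kn in \<open>auto simp: coeff_monom\<close>)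

end


definition Hp :: "nat \<Rightarrow> nat \<Rightarrow> (nat \<Rightarrow> 'a::field) \<Rightarrow> nat \<Rightarrow> 'a poly" where
  "Hp n k \<alpha> s = (if s < n - k - 2 then monom 1 s else if s = n - k - 2 then Lp n k \<alpha> else Gp n k \<alpha>)"

lemma parH_Hp: "parH n k \<alpha> s i = uco n \<alpha> i * poly (Hp n k \<alpha> s) (\<alpha> i)"
  by (simp add: parH_def Hp_def poly_monom poly_Lp poly_Gp)

context cfg begin

lemma gen_exp_E: "r < k \<Longrightarrow> gen_exp k r \<le> k - 3 \<or> gen_exp k r = k \<or> gen_exp k r = k + 1"
  using k3 by (auto simp: gen_exp_def)

lemma orth_H:
  assumes "s < n - k" "e \<le> k - 3 \<or> e = k \<or> e = k + 1"
  shows "phi n \<alpha> e (Hp n k \<alpha> s) = 0"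
  using assms orth_L orth_G orth_M by (auto simp: Hp_def)

lemma subA: "row_space (n - k) n (parH n k \<alpha>) \<subseteq> dual_code n (row_space k n (genG k \<alpha>))"
proof
  fix y assume "y \<in> row_space (n - k) n (parH n k \<alpha>)"
  then obtain d where y: "y = zero_ext n (\<lambda>i. \<Sum>s<n - k. d s * parH n k \<alpha> s i)"
    by (auto simp: row_space_def)
  have "y \<in> vecs n" by (simp add: y vecs_def zero_ext_def)
  moreover have "dot n x y = 0" if xin: "x \<in> row_space k n (genG k \<alpha>)" for x
  proof -
    obtain c where x: "x = zero_ext n (\<lambda>i. \<Sum>r<k. c r * genG k \<alpha> r i)"
      using xin unfolding row_space_def by blast
    have "dot n x y = (\<Sum>i<n. (\<Sum>r<k. c r * \<alpha> i ^ gen_exp k r) * (\<Sum>s<n - k. d s * (uco n \<alpha> i * poly (Hp n k \<alpha> s) (\<alpha> i))))"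
      by (simp add: dot_def x y zero_ext_def genG_def parH_Hp)
    also have "\<dots> = (\<Sum>i<n. \<Sum>r<k. \<Sum>s<n - k. c r * d s * (uco n \<alpha> i * (\<alpha> i ^ gen_exp k r * poly (Hp n k \<alpha> s) (\<alpha> i))))"
      by (simp add: sum_product mult_ac)
    also have "\<dots> = (\<Sum>r<k. \<Sum>s<n - k. \<Sum>i<n. c r * d s * (uco n \<alpha> i * (\<alpha> i ^ gen_exp k r * poly (Hp n k \<alpha> s) (\<alpha> i))))"
      by (subst sum.swap, subst (2) sum.swap, rule refl)
    also have "\<dots> = (\<Sum>r<k. \<Sum>s<n - k. c r * d s * phi n \<alpha> (gen_exp k r) (Hp n k \<alpha> s))"
      by (simp add: phi_def sum_distrib_left)
    also have "\<dots> = 0"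
      using orth_H gen_exp_E by simp
    finally show ?thesis .
  qed
  ultimately show "y \<in> dual_code n (row_space k n (genG k \<alpha>))" by (simp add: dual_code_def)
qed

end


lemma poly_trunc:
  fixes p :: "'a::field poly"
  assumes c: "\<forall>m\<ge>d. coeff p m = 0"
  shows "poly p x = (\<Sum>r<d. coeff p r * x ^ r)"
proof (cases "p = 0")
  case True thus ?thesis by simp
next
  case False
  hence "coeff p (degree p) \<noteq> 0" by simp
  hence dl: "degree p < d" using c by (meson not_le)
  have "poly p x = (\<Sum>i\<le>degree p. coeff p i * x ^ i)" by (rule poly_altdef)
  also have "\<dots> = (\<Sum>r<d. coeff p r * x ^ r)"
    by (rule sum.mono_neutral_left) (use dl in \<open>auto simp: coeff_eq_0\<close>)
  finally show ?thesis .
qed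

lemma lag_zero:
  fixes \<alpha> :: "nat \<Rightarrow> 'a::field"
  assumes "i < n" "l < n" "i \<noteq> l"
  shows "poly (lag n \<alpha> i) (\<alpha> l) = 0"
  using assms unfolding lag_def poly_prod by (auto intro!: prod_zero)

context cfg begin

lemma orth_y:
  assumes yd: "y \<in> dual_code n (row_space k n (genG k \<alpha>))" and e: "e \<le> k - 3 \<or> e = k \<or> e = k + 1"
  shows "(\<Sum>i<n. \<alpha> i ^ e * y i) = 0"
proof -
  define r where "r = (if e \<le> k - 3 then e else if e = k then k - 2 else k - 1)"
  have r: "r < k" "gen_exp k r = e" using e k3 by (auto simp: r_def gen_exp_def)
  define x where "x = zero_ext n (\<lambda>i. \<Sum>r'<k. (if r' = r then 1 else 0) * genG k \<alpha> r' i)"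
  have "x \<in> row_space k n (genG k \<alpha>)" unfolding x_def row_space_def by (intro CollectI exI[of _ "\<lambda>r'. if r' = r then 1 else 0"]) simp
  hence "dot n x y = 0" using yd by (auto simp: dual_code_def)
  moreover have "dot n x y = (\<Sum>i<n. \<alpha> i ^ e * y i)"
  proof -
    have "(\<Sum>r'<k. (if r' = r then 1 else 0) * genG k \<alpha> r' i) = \<alpha> i ^ e" for i
    proof -
      have "(\<Sum>r'<k. (if r' = r then 1 else 0) * genG k \<alpha> r' i) = (\<Sum>r'<k. if r' = r then genG k \<alpha> r' i else 0)"
        by (rule sum.cong) auto
      thus ?thesis using r by (simp add: genG_def)
    qed
    thus ?thesis by (simp add: dot_def x_def zero_ext_def)
  qed
  ultimately show ?thesis by simp
qed

lemma subB: "dual_code n (row_space k n (genG k \<alpha>)) \<subseteq> row_space (n - k) n (parH n k \<alpha>)"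
proof
  fix y assume yd: "y \<in> dual_code n (row_space k n (genG k \<alpha>))"
  have yv: "\<forall>i\<ge>n. y i = 0" using yd by (simp add: dual_code_def vecs_def)
  define f where "f = (\<Sum>i<n. smult (y i) (lag n \<alpha> i))"
  have fv: "uco n \<alpha> l * poly f (\<alpha> l) = y l" if l: "l < n" for l
  proof -
    have "poly f (\<alpha> l) = (\<Sum>i<n. y i * poly (lag n \<alpha> i) (\<alpha> l))" by (simp add: f_def poly_sum)
    also have "\<dots> = (\<Sum>i<n. if i = l then y l * poly (lag n \<alpha> l) (\<alpha> l) else 0)"
      by (rule sum.cong) (auto simp: lag_zero l)
    also have "\<dots> = y l * poly (lag n \<alpha> l) (\<alpha> l)" using l by simp
    finally show ?thesis using lag_poly[OF inj l l] by (simp add: mult_ac)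
  qed
  have fc: "\<forall>m\<ge>n. coeff f m = 0" by (simp add: f_def coeff_sum lag_coeff(2))
  define a where "a = coeff f (n - k + 1)"
  define b where "b = coeff f (n - k) + a * esym n \<alpha> 1"
  define g where "g = f - smult a (Lp n k \<alpha>) - smult b (Gp n k \<alpha>)"
  have gc0: "\<forall>m\<ge>n. coeff g m = 0"
  proof (intro allI impI)
    fix m assume m: "m \<ge> n"
    have "coeff (Lp n k \<alpha>) m = 0" by (rule coeff_Lp(3)[OF kn]) (use m kn k3 in arith)
    moreover have "coeff (Gp n k \<alpha>) m = 0" by (rule coeff_Gp(3)[OF kn]) (use m kn k3 in arith)
    ultimately show "coeff g m = 0" using fc m by (simp add: g_def)
  qed
  have gc1: "coeff g (n - k + 1) = 0" "coeff g (n - k) = 0"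
    by (simp_all add: g_def a_def b_def coeff_Lp[OF kn, simplified] coeff_Gp[OF kn, simplified])
  have phig: "phi n \<alpha> e g = 0" if e: "e \<le> k - 3 \<or> e = k \<or> e = k + 1" for e
  proof -
    have "phi n \<alpha> e g = phi n \<alpha> e f - a * phi n \<alpha> e (Lp n k \<alpha>) - b * phi n \<alpha> e (Gp n k \<alpha>)"
      by (simp add: phi_def g_def algebra_simps sum_subtractf sum_distrib_left sum.distrib)
    also have "phi n \<alpha> e f = (\<Sum>i<n. \<alpha> i ^ e * y i)"
      unfolding phi_def by (rule sum.cong) (auto simp: fv[symmetric] mult_ac)
    finally show ?thesis using orth_y[OF yd e] orth_L[OF e] orth_G[OF e] by simp
  qed
  have st1: "\<forall>m\<ge>n - 1 - j. coeff g m = 0" if "j \<le> k - 3" for j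
    using that
  proof (induction j)
    case 0
    have "coeff g (n - 1) = 0" using shift_step[OF inj gc0, of 0] phig[of 0] kn by simp
    show ?case
    proof (intro allI impI)
      fix m assume "m \<ge> n - 1 - 0"
      hence "m \<ge> n \<or> m = n - 1" by arith
      thus "coeff g m = 0" using gc0 \<open>coeff g (n - 1) = 0\<close> by auto
    qed
  next
    case (Suc j)
    have IH: "\<forall>m\<ge>n - 1 - j. coeff g m = 0" using Suc by simp
    have "coeff g (n - 1 - Suc j) = 0"
      using shift_step[OF inj IH, of "Suc j"] phig[of "Suc j"] Suc.prems k3 kn by simp
    show ?case
    proof (intro allI impI)
      fix m assume "m \<ge> n - 1 - Suc j"
      hence "m \<ge> n - 1 - j \<or> m = n - 1 - Suc j" by arith
      thus "coeff g m = 0" using IH \<open>coeff g (n - 1 - Suc j) = 0\<close> by auto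
    qed
  qed
  have st2: "\<forall>m\<ge>n - k. coeff g m = 0"
  proof (intro allI impI)
    fix m assume m: "m \<ge> n - k"
    consider "m = n - k" | "m = n - k + 1" | "m \<ge> n - 1 - (k - 3)" using m k3 kn by linarith
    thus "coeff g m = 0" using gc1 st1[of "k - 3"] by cases auto
  qed
  have st3: "\<forall>m\<ge>n - k - 1. coeff g m = 0"
  proof -
    have "coeff g (n - 1 - k) = 0" using shift_step[OF inj st2, of k] phig[of k] k3 kn by simp
    show ?thesis
    proof (intro allI impI)
      fix m assume "m \<ge> n - k - 1"
      hence "m \<ge> n - k \<or> m = n - 1 - k" by arith
      thus "coeff g m = 0" using st2 \<open>coeff g (n - 1 - k) = 0\<close> by auto
    qed
  qed
  have st4: "\<forall>m\<ge>n - k - 2. coeff g m = 0"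
  proof -
    have "coeff g (n - 1 - (k + 1)) = 0" using shift_step[OF inj st3, of "k + 1"] phig[of "k + 1"] k3 kn by simp
    show ?thesis
    proof (intro allI impI)
      fix m assume "m \<ge> n - k - 2"
      hence "m \<ge> n - k - 1 \<or> m = n - 1 - (k + 1)" by arith
      thus "coeff g m = 0" using st3 \<open>coeff g (n - 1 - (k + 1)) = 0\<close> by auto
    qed
  qed
  define c where "c = (\<lambda>r. if r < n - k - 2 then coeff g r else if r = n - k - 2 then a else b)"
  have "y = zero_ext n (\<lambda>i. \<Sum>r<n - k. c r * parH n k \<alpha> r i)"
  proof (rule ext)
    fix i
    show "y i = zero_ext n (\<lambda>i. \<Sum>r<n - k. c r * parH n k \<alpha> r i) i"
    proof (cases "i < n")
      case False thus ?thesis using yv by (simp add: zero_ext_def)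
    next
      case True
      have nk: "n - k = Suc (Suc (n - k - 2))" using kn by arith
      have s1: "(\<Sum>r<n - k - 2. c r * parH n k \<alpha> r i) = uco n \<alpha> i * (\<Sum>r<n - k - 2. coeff g r * \<alpha> i ^ r)"
        unfolding sum_distrib_left by (rule sum.cong) (auto simp: c_def parH_def)
      have "(\<Sum>r<n - k. c r * parH n k \<alpha> r i) = (\<Sum>r<n - k - 2. c r * parH n k \<alpha> r i)
          + c (n - k - 2) * parH n k \<alpha> (n - k - 2) i + c (Suc (n - k - 2)) * parH n k \<alpha> (Suc (n - k - 2)) i"
        by (subst nk) simp
      also have "\<dots> = uco n \<alpha> i * ((\<Sum>r<n - k - 2. coeff g r * \<alpha> i ^ r) + a * Lam n k \<alpha> i + b * Gam n k \<alpha> i)"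
        unfolding s1 by (simp add: c_def parH_def algebra_simps)
      also have "(\<Sum>r<n - k - 2. coeff g r * \<alpha> i ^ r) = poly g (\<alpha> i)"
        using poly_trunc[OF st4] by simp
      also have "poly g (\<alpha> i) + a * Lam n k \<alpha> i + b * Gam n k \<alpha> i = poly f (\<alpha> i)"
        by (simp add: g_def poly_Lp poly_Gp)
      also have "uco n \<alpha> i * poly f (\<alpha> i) = y i" using fv[OF True] .
      finally show ?thesis using True by (simp add: zero_ext_def)
    qed
  qed
  thus "y \<in> row_space (n - k) n (parH n k \<alpha>)" unfolding row_space_def by blast
qed

end


context cfg begin

lemma frank: "full_row_rank (n - k) n (parH n k \<alpha>)"
  unfolding full_row_rank_def
proof (intro allI impI)
  fix c :: "nat \<Rightarrow> 'a" and r
  assume h: "\<forall>i<n. (\<Sum>r<n - k. c r * parH n k \<alpha> r i) = 0" and r: "r < n - k"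
  define F where "F = (\<Sum>r<n - k - 2. smult (c r) (monom 1 r)) + smult (c (n - k - 2)) (Lp n k \<alpha>)
      + smult (c (Suc (n - k - 2))) (Gp n k \<alpha>)"
  have nk: "n - k = Suc (Suc (n - k - 2))" using kn by arith
  have Fv: "uco n \<alpha> i * poly F (\<alpha> i) = (\<Sum>r<n - k. c r * parH n k \<alpha> r i)" for i
  proof -
    have s1: "(\<Sum>r<n - k - 2. c r * parH n k \<alpha> r i) = uco n \<alpha> i * (\<Sum>r<n - k - 2. c r * \<alpha> i ^ r)"
      unfolding sum_distrib_left by (rule sum.cong) (auto simp: parH_def)
    have "(\<Sum>r<n - k. c r * parH n k \<alpha> r i) = (\<Sum>r<n - k - 2. c r * parH n k \<alpha> r i)
          + c (n - k - 2) * parH n k \<alpha> (n - k - 2) i + c (Suc (n - k - 2)) * parH n k \<alpha> (Suc (n - k - 2)) i"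
      by (subst nk) simp
    also have "\<dots> = uco n \<alpha> i * poly F (\<alpha> i)"
      unfolding s1 by (simp add: F_def parH_def algebra_simps poly_sum poly_monom poly_Lp poly_Gp)
    finally show ?thesis by simp
  qed
  have "F = 0"
  proof (rule roots_zero[OF inj])
    show "\<forall>m\<ge>n. coeff F m = 0"
    proof (intro allI impI)
      fix m assume m: "m \<ge> n"
      have "coeff (Lp n k \<alpha>) m = 0" by (rule coeff_Lp(3)[OF kn]) (use m kn k3 in arith)
      moreover have "coeff (Gp n k \<alpha>) m = 0" by (rule coeff_Gp(3)[OF kn]) (use m kn k3 in arith)
      moreover have "(\<Sum>r<n - k - 2. c r * coeff (monom 1 r) m) = 0"
        by (rule sum.neutral) (use m in auto)
      ultimately show "coeff F m = 0" by (simp add: F_def coeff_sum)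
    qed
    show "\<forall>i<n. poly F (\<alpha> i) = 0" using h Fv uco_nz[OF inj] by (metis mult_eq_0_iff)
  qed
  have cF: "coeff F m = (if m < n - k - 2 then c m else 0) + c (n - k - 2) * coeff (Lp n k \<alpha>) m
      + c (Suc (n - k - 2)) * coeff (Gp n k \<alpha>) m" for m
  proof -
    have "(\<Sum>r<n - k - 2. c r * coeff (monom 1 r) m) = (\<Sum>r<n - k - 2. if r = m then c m else 0)"
      by (rule sum.cong) auto
    thus ?thesis by (simp add: F_def coeff_sum)
  qed
  have c1: "c (n - k - 2) = 0" using cF[of "n - k + 1"] \<open>F = 0\<close> by (simp add: coeff_Lp(1)[OF kn, simplified] coeff_Gp(1)[OF kn, simplified] split: if_splits)
  have c2: "c (Suc (n - k - 2)) = 0" using cF[of "n - k"] \<open>F = 0\<close> c1 by (simp add: coeff_Gp(2)[OF kn, simplified] split: if_splits)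
  show "c r = 0"
  proof -
    consider "r < n - k - 2" | "r = n - k - 2" | "r = Suc (n - k - 2)" using r nk by linarith
    thus ?thesis
    proof cases
      case 1 thus ?thesis using cF[of r] \<open>F = 0\<close> c1 c2 by (simp del: diff_diff_left)
    qed (use c1 c2 in auto)
  qed
qed

lemma main: "parity_check (n - k) n (parH n k \<alpha>) (row_space k n (genG k \<alpha>))"
  unfolding parity_check_def using frank subA subB by blast

end

theorem theorem3p2:
  fixes \<alpha> :: "nat \<Rightarrow> 'a::{finite, field}" and n k :: nat
  assumes "3 \<le> k" and "k \<le> n - 2" and "n - 2 \<le> card (UNIV :: 'a set) - 2"
    and "inj_on \<alpha> {..<n}"
  shows "parity_check (n - k) n (parH n k \<alpha>) (row_space k n (genG k \<alpha>))"
proof -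
  interpret cfg \<alpha> n k using assms by unfold_locales arith+
  show ?thesis by (rule main)
qed

end
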